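(* Let $n\ge 2$, let $c_1,\dots,c_n\ge 2$ be integers, let $d$ be prime, and let $f:\mathbb{Z}_{c_1}\times\cdots\times\mathbb{Z}_{c_n}\to\mathbb{Z}_d$ be any function. Then the distribution $$p(\mathbf{m}|\mathbf{s})=\begin{cases} d^{1-n} & \text{if } \sum_{j=1}^n m_j\equiv f(\mathbf{s}) \pmod d,\\ 0&\text{otherwise},\end{cases}$$ is non-signaling and satisfies $p\big(\sum_j m_j\equiv f(\mathbf{s})\,\big|\,\mathbf{s}\big)=1$ for every $\mathbf{s}$. Moreover, it is the unique non-signaling distribution $p(\mathbf{m}|\mathbf{s})$ satisfying $p\big(\sum_j m_j\equiv f(\mathbf{s})\,\big|\,\mathbf{s}\big)=1$ for all $\mathbf{s}$ if and only if $f$ is not bi-partite linear.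
   Context: A conditional distribution $p(\mathbf{m}|\mathbf{s})$ with $\mathbf{m}\in\mathbb{Z}_d^n$, $\mathbf{s}\in\prod_j\mathbb{Z}_{c_j}$ (nonnegative, summing to 1 over $\mathbf{m}$ for each $\mathbf{s}$) is non-signaling if for every subset $S\subseteq\{1,\dots,n\}$ the marginal distribution of the outcomes $(m_j)_{j\in S}$ depends only on $(s_j)_{j\in S}$. A bipartition $\{A,B\}$ of $\{1,\dots,n\}$ is a division into two disjoint non-empty sets with $A\cup B=\{1,\dots,n\}$. The function $f$ is bi-partite linear if there exists a bipartition $\{A,B\}$ and functions $f^A$ of $\mathbf{s}^A=(s_j)_{j\in A}$ and $f^B$ of $\mathbf{s}^B=(s_j)_{j\in B}$, valued in $\mathbb{Z}_d$, with $f(\mathbf{s})=f^A(\mathbf{s}^A)+f^B(\mathbf{s}^B)$ (mod $d$) for all $\mathbf{s}$. *)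

theory Defs
  imports Complex_Main "HOL-Library.FuncSet" "HOL-Computational_Algebra.Primes"
begin

text \<open>Parties are indexed by 0..n-1. Input strings s are extensional functions
  with s j < c j, outcome strings m are extensional functions with m j < d.\<close>

definition Ins :: "nat \<Rightarrow> (nat \<Rightarrow> nat) \<Rightarrow> (nat \<Rightarrow> nat) set" where
  "Ins n c = PiE {..<n} (\<lambda>j. {..<c j})"

definition Outs :: "nat \<Rightarrow> nat \<Rightarrow> (nat \<Rightarrow> nat) set" where
  "Outs n d = PiE {..<n} (\<lambda>_. {..<d})"

text \<open>p m s is the probability of outcome m given input s.\<close>
definition is_cond_dist ::
  "nat \<Rightarrow> nat \<Rightarrow> (nat \<Rightarrow> nat) \<Rightarrow> ((nat \<Rightarrow> nat) \<Rightarrow> (nat \<Rightarrow> nat) \<Rightarrow> real) \<Rightarrow> bool" where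
  "is_cond_dist n d c p \<longleftrightarrow>
     (\<forall>s\<in>Ins n c. (\<forall>m\<in>Outs n d. p m s \<ge> 0) \<and> (\<Sum>m\<in>Outs n d. p m s) = 1)"

definition marginal ::
  "nat \<Rightarrow> nat \<Rightarrow> ((nat \<Rightarrow> nat) \<Rightarrow> (nat \<Rightarrow> nat) \<Rightarrow> real) \<Rightarrow> nat set \<Rightarrow> (nat \<Rightarrow> nat) \<Rightarrow> (nat \<Rightarrow> nat) \<Rightarrow> real" where
  "marginal n d p S s mS = (\<Sum>m\<in>{m\<in>Outs n d. restrict m S = mS}. p m s)"

definition non_signaling ::
  "nat \<Rightarrow> nat \<Rightarrow> (nat \<Rightarrow> nat) \<Rightarrow> ((nat \<Rightarrow> nat) \<Rightarrow> (nat \<Rightarrow> nat) \<Rightarrow> real) \<Rightarrow> bool" where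
  "non_signaling n d c p \<longleftrightarrow>
     (\<forall>S. S \<subseteq> {..<n} \<longrightarrow>
        (\<forall>s\<in>Ins n c. \<forall>s'\<in>Ins n c. restrict s S = restrict s' S \<longrightarrow>
           (\<forall>mS. marginal n d p S s mS = marginal n d p S s' mS)))"

definition prob_sum_eq ::
  "nat \<Rightarrow> nat \<Rightarrow> ((nat \<Rightarrow> nat) \<Rightarrow> nat) \<Rightarrow> ((nat \<Rightarrow> nat) \<Rightarrow> (nat \<Rightarrow> nat) \<Rightarrow> real) \<Rightarrow> (nat \<Rightarrow> nat) \<Rightarrow> real" where
  "prob_sum_eq n d f p s =
     (\<Sum>m\<in>{m\<in>Outs n d. (\<Sum>j<n. m j) mod d = f s mod d}. p m s)"

definition bipartite_linear ::
  "nat \<Rightarrow> nat \<Rightarrow> (nat \<Rightarrow> nat) \<Rightarrow> ((nat \<Rightarrow> nat) \<Rightarrow> nat) \<Rightarrow> bool" where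
  "bipartite_linear n d c f \<longleftrightarrow>
     (\<exists>A B. A \<noteq> {} \<and> B \<noteq> {} \<and> A \<inter> B = {} \<and> A \<union> B = {..<n} \<and>
        (\<exists>fA fB. (\<forall>s\<in>Ins n c. fA (restrict s A) < d \<and> fB (restrict s B) < d \<and>
                    f s mod d = (fA (restrict s A) + fB (restrict s B)) mod d)))"

definition box_dist ::
  "nat \<Rightarrow> nat \<Rightarrow> ((nat \<Rightarrow> nat) \<Rightarrow> nat) \<Rightarrow> (nat \<Rightarrow> nat) \<Rightarrow> (nat \<Rightarrow> nat) \<Rightarrow> real" where
  "box_dist n d f m s =
     (if (\<Sum>j<n. m j) mod d = f s mod d then 1 / real d ^ (n - 1) else 0)"

end

theory Submission
  imports Defs "HOL-Number_Theory.Cong"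
begin

lemma periodic:
  fixes h :: "int \<Rightarrow> 'a" and d :: nat
  assumes d: "d > 0" and hm: "\<forall>z. h z = h (z mod int d)" and hu: "\<forall>z. h (z + u) = h z"
    and cop: "coprime u (int d)"
  shows "h z = h 0"
proof -
  obtain k where k: "[u * k = 1] (mod int d)" using cong_solve_coprime_int[OF cop] by blast
  define k' where "k' = nat (k mod int d)"
  have "[u * int k' = 1] (mod int d)"
    using k d unfolding k'_def by (metis cong_def mod_mult_right_eq of_nat_0_less_iff pos_mod_sign int_nat_eq)
  have it: "h (z + int i * u) = h z" for z i
  proof (induction i arbitrary: z)
    case 0 then show ?case by simp
  next
    case (Suc i)
    have "h (z + int (Suc i) * u) = h ((z + int i * u) + u)" by (simp add: algebra_simps)
    also have "\<dots> = h (z + int i * u)" using hu by blast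
    finally show ?case using Suc by simp
  qed
  have step: "h (z + 1) = h z" for z
  proof -
    have "(z + 1) mod int d = (z + int k' * u) mod int d"
      using \<open>[u * int k' = 1] (mod int d)\<close> unfolding cong_def
      by (metis mod_add_right_eq mult.commute)
    then show ?thesis using hm it by metis
  qed
  have nn: "h (int i) = h 0" for i
  proof (induction i)
    case (Suc i) then show ?case using step[of "int i"] by (simp add: add.commute)
  qed simp
  have "h z = h (int (nat (z mod int d)))" using hm d by simp
  then show ?thesis using nn by metis
qed

lemma upd_sum:
  fixes w :: "nat \<Rightarrow> int" and t :: "nat \<Rightarrow> nat"
  assumes "j0 < n"
  shows "(\<Sum>j<n. w j * int ((t(j0:=x)) j)) = (\<Sum>j<n. w j * int (t j)) + w j0 * (int x - int (t j0))"
proof -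
  have "(\<Sum>j<n. w j * int ((t(j0:=x)) j)) = w j0 * int x + (\<Sum>j\<in>{..<n}-{j0}. w j * int ((t(j0:=x)) j))"
    using assms by (subst sum.remove[of _ j0]) auto
  also have "(\<Sum>j\<in>{..<n}-{j0}. w j * int ((t(j0:=x)) j)) = (\<Sum>j\<in>{..<n}-{j0}. w j * int (t j))"
    by (rule sum.cong) auto
  also have "(\<Sum>j<n. w j * int (t j)) = w j0 * int (t j0) + (\<Sum>j\<in>{..<n}-{j0}. w j * int (t j))"
    using assms by (subst sum.remove[of _ j0]) auto
  ultimately show ?thesis by (simp add: algebra_simps)
qed

lemma Outs_upd: "t \<in> Outs n d \<Longrightarrow> j0 < n \<Longrightarrow> x < d \<Longrightarrow> t(j0:=x) \<in> Outs n d"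
  unfolding Outs_def by (auto simp: PiE_iff extensional_def)

lemma Outs_lt: "t \<in> Outs n d \<Longrightarrow> j < n \<Longrightarrow> t j < d"
  unfolding Outs_def by (auto simp: PiE_iff)

lemma finite_Outs: "finite (Outs n d)"
  unfolding Outs_def by (auto intro: finite_PiE)

lemma shift_count:
  fixes w :: "nat \<Rightarrow> int"
  assumes d: "d > 0" and j0: "j0 < n" and cop: "coprime (w j0) (int d)"
    and Q: "\<forall>t v. Q (t(j0 := v)) = Q t"
  shows "card {t\<in>Outs n d. Q t \<and> (\<Sum>j<n. w j * int (t j)) mod int d = \<alpha> mod int d}
       = card {t\<in>Outs n d. Q t \<and> (\<Sum>j<n. w j * int (t j)) mod int d = 0}"
proof -
  define L where "L t = (\<Sum>j<n. w j * int (t j))" for t :: "nat \<Rightarrow> nat"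
  define N where "N z = card {t\<in>Outs n d. Q t \<and> L t mod int d = z mod int d}" for z
  define \<sigma> where "\<sigma> t = t(j0 := (t j0 + 1) mod d)" for t :: "nat \<Rightarrow> nat"
  define \<tau> where "\<tau> t = t(j0 := (t j0 + d - 1) mod d)" for t :: "nat \<Rightarrow> nat"
  have Ls: "L (\<sigma> t) mod int d = (L t + w j0) mod int d" if "t \<in> Outs n d" for t
  proof -
    have lt: "t j0 < d" using Outs_lt that j0 by blast
    have e: "L (\<sigma> t) = L t + w j0 * (int ((t j0 + 1) mod d) - int (t j0))"
      unfolding L_def \<sigma>_def by (rule upd_sum[OF j0])
    show ?thesis
    proof (cases "t j0 + 1 = d")
      case True
      then have "(t j0 + 1) mod d = 0" by simp
      then have "L (\<sigma> t) = L t - w j0 * int (t j0)" using e by simp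
      moreover have "int d = int (t j0) + 1" using True by simp
      ultimately have "L (\<sigma> t) = L t + w j0 + (- w j0) * int d" by (simp add: algebra_simps)
      then show ?thesis by (metis mod_mult_self1 mult.commute)
    next
      case False
      then have "(t j0 + 1) mod d = t j0 + 1" using lt by simp
      then have "L (\<sigma> t) = L t + w j0" using e by simp
      then show ?thesis by simp
    qed
  qed
  have st: "\<sigma> (\<tau> t) = t" "\<tau> (\<sigma> t) = t" if "t \<in> Outs n d" for t
  proof -
    have lt: "t j0 < d" using Outs_lt that j0 by blast
    have a: "((t j0 + d - 1) mod d + 1) mod d = t j0"
    proof (cases "t j0 = 0")
      case True
      have "(t j0 + d - 1) mod d = d - 1" using True d by simp
      moreover have "d - 1 + 1 = d" using d by simp
      ultimately show ?thesis using True by simp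
    next
      case False
      then have e1: "t j0 + d - 1 = (t j0 - 1) + d" by simp
      have "(t j0 + d - 1) mod d = (t j0 - 1) mod d" unfolding e1 by (rule mod_add_self2)
      also have "\<dots> = t j0 - 1" using lt by simp
      finally have "(t j0 + d - 1) mod d = t j0 - 1" .
      moreover have "t j0 - 1 + 1 = t j0" using False by simp
      ultimately show ?thesis using lt by simp
    qed
    have b: "((t j0 + 1) mod d + d - 1) mod d = t j0"
    proof (cases "t j0 + 1 = d")
      case True
      then have "(t j0 + 1) mod d = 0" by simp
      moreover have "(0 + d - 1) mod d = t j0" using True by simp
      ultimately show ?thesis by simp
    next
      case False
      then have "(t j0 + 1) mod d = t j0 + 1" using lt by simp
      moreover have "t j0 + 1 + d - 1 = t j0 + d" by simp
      moreover have "(t j0 + d) mod d = t j0" using lt by simp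
      ultimately show ?thesis by simp
    qed
    show "\<sigma> (\<tau> t) = t" "\<tau> (\<sigma> t) = t"
      unfolding \<sigma>_def \<tau>_def using a b by (auto simp: fun_eq_iff)
  qed
  have so: "\<sigma> t \<in> Outs n d" "\<tau> t \<in> Outs n d" if "t \<in> Outs n d" for t
    unfolding \<sigma>_def \<tau>_def using that j0 d by (auto intro!: Outs_upd)
  have NS: "N (z + w j0) = N z" for z
  proof -
    have "bij_betw \<sigma> {t\<in>Outs n d. Q t \<and> L t mod int d = z mod int d}
                   {t\<in>Outs n d. Q t \<and> L t mod int d = (z + w j0) mod int d}"
    proof (rule bij_betw_byWitness[where f'=\<tau>])
      show "\<forall>a\<in>{t \<in> Outs n d. Q t \<and> L t mod int d = z mod int d}. \<tau> (\<sigma> a) = a" using st by auto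
      show "\<forall>a'\<in>{t \<in> Outs n d. Q t \<and> L t mod int d = (z + w j0) mod int d}. \<sigma> (\<tau> a') = a'" using st by auto
      show "\<sigma> ` {t \<in> Outs n d. Q t \<and> L t mod int d = z mod int d}
          \<subseteq> {t \<in> Outs n d. Q t \<and> L t mod int d = (z + w j0) mod int d}"
      proof safe
        fix t assume t: "t \<in> Outs n d" "Q t" "L t mod int d = z mod int d"
        show "\<sigma> t \<in> Outs n d" using so t by blast
        show "Q (\<sigma> t)" using Q t(2) unfolding \<sigma>_def by simp
        show "L (\<sigma> t) mod int d = (z + w j0) mod int d" using Ls[OF t(1)] t(3)
          by (metis mod_add_left_eq)
      qed
      show "\<tau> ` {t \<in> Outs n d. Q t \<and> L t mod int d = (z + w j0) mod int d}
          \<subseteq> {t \<in> Outs n d. Q t \<and> L t mod int d = z mod int d}"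
      proof safe
        fix t assume t: "t \<in> Outs n d" "Q t" "L t mod int d = (z + w j0) mod int d"
        show "\<tau> t \<in> Outs n d" using so t by blast
        show "Q (\<tau> t)" using Q t(2) unfolding \<tau>_def by simp
        have "L t mod int d = (L (\<tau> t) + w j0) mod int d" using Ls[OF so(2)[OF t(1)]] st(1)[OF t(1)] by simp
        then have "(L (\<tau> t) + w j0) mod int d = (z + w j0) mod int d" using t(3) by simp
        then have "(L (\<tau> t) + w j0 - w j0) mod int d = (z + w j0 - w j0) mod int d"
          by (rule mod_diff_cong) simp
        then show "L (\<tau> t) mod int d = z mod int d" by simp
      qed
    qed
    then show ?thesis unfolding N_def by (simp add: bij_betw_same_card)
  qed
  have h1: "\<forall>z. N z = N (z mod int d)" unfolding N_def by simp
  have h2: "\<forall>z. N (z + w j0) = N z" using NS by blast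
  have "N \<alpha> = N 0" by (rule periodic[OF d h1 h2 cop])
  then show ?thesis unfolding N_def L_def by simp
qed

lemma card_Outs: "card (Outs n d) = d ^ n"
  unfolding Outs_def by (simp add: card_PiE)

lemma card_split_residues:
  fixes g :: "'a \<Rightarrow> int"
  assumes "finite X" "\<forall>x\<in>X. g x \<in> {0..<D}"
  shows "card X = (\<Sum>z\<in>{0..<D}. card {x\<in>X. g x = z})"
proof -
  have "(\<Sum>z\<in>{0..<D}. sum (\<lambda>_. 1::nat) {x. x \<in> X \<and> g x = z}) = sum (\<lambda>_. 1) X"
    by (rule sum.group) (use assms in auto)
  then show ?thesis by simp
qed

lemma count_uniform:
  fixes w :: "nat \<Rightarrow> int"
  assumes d: "d > 0" and j0: "j0 < n" and cop: "coprime (w j0) (int d)"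
    and Q: "\<forall>t v. Q (t(j0 := v)) = Q t"
  shows "d * card {t\<in>Outs n d. Q t \<and> (\<Sum>j<n. w j * int (t j)) mod int d = \<alpha> mod int d}
       = card {t\<in>Outs n d. Q t}"
proof -
  define L where "L t = (\<Sum>j<n. w j * int (t j))" for t :: "nat \<Rightarrow> nat"
  have fin: "finite {t\<in>Outs n d. Q t}" using finite_Outs by auto
  have "card {t\<in>Outs n d. Q t} = (\<Sum>z\<in>{0..<int d}. card {t\<in>{t\<in>Outs n d. Q t}. L t mod int d = z})"
    by (rule card_split_residues[OF fin]) (use d in auto)
  also have "\<dots> = (\<Sum>z\<in>{0..<int d}. card {t\<in>Outs n d. Q t \<and> L t mod int d = \<alpha> mod int d})"
  proof (rule sum.cong[OF refl])
    fix z assume z: "z \<in> {0..<int d}"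
    have "card {t\<in>{t\<in>Outs n d. Q t}. L t mod int d = z} = card {t\<in>Outs n d. Q t \<and> L t mod int d = z mod int d}"
      using z by (simp add: conj_assoc)
    also have "\<dots> = card {t\<in>Outs n d. Q t \<and> L t mod int d = 0}"
      unfolding L_def by (rule shift_count[where w=w and Q=Q, OF d j0 cop Q])
    also have "\<dots> = card {t\<in>Outs n d. Q t \<and> L t mod int d = \<alpha> mod int d}"
      unfolding L_def by (rule shift_count[where w=w and Q=Q, OF d j0 cop Q, symmetric])
    finally show "card {t\<in>{t\<in>Outs n d. Q t}. L t mod int d = z} = card {t\<in>Outs n d. Q t \<and> L t mod int d = \<alpha> mod int d}" .
  qed
  also have "\<dots> = d * card {t\<in>Outs n d. Q t \<and> L t mod int d = \<alpha> mod int d}" by simp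
  finally show ?thesis unfolding L_def by simp
qed

lemma sum_int_mod:
  "((\<Sum>j<n. m j) mod d = v mod d) \<longleftrightarrow> ((\<Sum>j<n. 1 * int (m j)) mod int d = int v mod int d)"
proof -
  have "int (\<Sum>j<n. m j) = (\<Sum>j<n. 1 * int (m j))" by simp
  then show ?thesis by (metis of_nat_eq_iff zmod_int)
qed

lemma card_good:
  assumes "n > 0" "d > 0"
  shows "card {m\<in>Outs n d. (\<Sum>j<n. m j) mod d = v mod d} = d ^ (n - 1)"
proof -
  have "d * card {m\<in>Outs n d. True \<and> (\<Sum>j<n. (\<lambda>_. 1::int) j * int (m j)) mod int d = int v mod int d}
       = card {m\<in>Outs n d. True}"
    by (rule count_uniform[where w="\<lambda>_. 1" and Q="\<lambda>_. True", OF assms(2) assms(1)]) auto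
  then have "d * card {m\<in>Outs n d. (\<Sum>j<n. m j) mod d = v mod d} = d ^ n"
    by (simp add: sum_int_mod card_Outs)
  moreover have "d ^ n = d * d ^ (n - 1)" using assms by (metis Suc_diff_1 power_Suc)
  ultimately show ?thesis using assms by simp
qed

lemma sum_if_const:
  "finite A \<Longrightarrow> (\<Sum>m\<in>A. if P m then (K::real) else 0) = K * card {m\<in>A. P m}"
  by (simp add: sum.If_cases Int_def)

lemma box_cond:
  assumes "n > 0" "d > 0"
  shows "is_cond_dist n d c (box_dist n d f)"
  unfolding is_cond_dist_def
proof safe
  fix s m show "0 \<le> box_dist n d f m s" unfolding box_dist_def by simp
next
  fix s
  have "(\<Sum>m\<in>Outs n d. box_dist n d f m s)
      = 1 / real d ^ (n - 1) * card {m\<in>Outs n d. (\<Sum>j<n. m j) mod d = f s mod d}"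
    unfolding box_dist_def by (rule sum_if_const[OF finite_Outs])
  also have "\<dots> = 1" using card_good[OF assms] assms by simp
  finally show "(\<Sum>m\<in>Outs n d. box_dist n d f m s) = 1" .
qed

lemma box_prob:
  assumes "n > 0" "d > 0"
  shows "prob_sum_eq n d f (box_dist n d f) s = 1"
proof -
  have "prob_sum_eq n d f (box_dist n d f) s
      = (\<Sum>m\<in>{m\<in>Outs n d. (\<Sum>j<n. m j) mod d = f s mod d}. 1 / real d ^ (n - 1))"
    unfolding prob_sum_eq_def box_dist_def by (rule sum.cong) auto
  also have "\<dots> = 1" using card_good[OF assms] assms by simp
  finally show ?thesis .
qed

lemma marginal_if_const:
  "marginal n d (\<lambda>m s. if P m s then (K::real) else 0) S s mS
     = K * card {m\<in>Outs n d. restrict m S = mS \<and> P m s}"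
proof -
  have "marginal n d (\<lambda>m s. if P m s then (K::real) else 0) S s mS
     = K * card {m\<in>{m\<in>Outs n d. restrict m S = mS}. P m s}"
    unfolding marginal_def by (rule sum_if_const) (simp add: finite_Outs)
  then show ?thesis by (simp add: conj_assoc)
qed

lemma restrict_upd_out: "j0 \<notin> S \<Longrightarrow> restrict (m(j0 := v)) S = restrict m S"
  by (auto simp: restrict_def fun_eq_iff)

lemma Ins_restrict_all: "s \<in> Ins n c \<Longrightarrow> restrict s {..<n} = s"
  unfolding Ins_def by simp

lemma box_ns:
  assumes "n > 0" "d > 0"
  shows "non_signaling n d c (box_dist n d f)"
  unfolding non_signaling_def
proof safe
  fix S s s' mS
  assume S: "S \<subseteq> {..<n}" and s: "s \<in> Ins n c" and s': "s' \<in> Ins n c"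
    and r: "restrict s S = restrict s' S"
  show "marginal n d (box_dist n d f) S s mS = marginal n d (box_dist n d f) S s' mS"
  proof (cases "S = {..<n}")
    case True
    then have "s = s'" using r Ins_restrict_all[OF s] Ins_restrict_all[OF s'] by simp
    then show ?thesis by simp
  next
    case False
    then obtain j0 where j0: "j0 < n" "j0 \<notin> S" using S by blast
    have eq: "card {m\<in>Outs n d. restrict m S = mS \<and> (\<Sum>j<n. m j) mod d = v mod d}
        = card {m\<in>Outs n d. restrict m S = mS \<and> (\<Sum>j<n. (\<lambda>_. 1::int) j * int (m j)) mod int d = 0}" for v
    proof -
      have "card {m\<in>Outs n d. restrict m S = mS \<and> (\<Sum>j<n. (\<lambda>_. 1::int) j * int (m j)) mod int d = int v mod int d}
        = card {m\<in>Outs n d. restrict m S = mS \<and> (\<Sum>j<n. (\<lambda>_. 1::int) j * int (m j)) mod int d = 0}"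
        by (rule shift_count[where w="\<lambda>_. 1" and Q="\<lambda>m. restrict m S = mS", OF assms(2) j0(1)])
          (use j0 restrict_upd_out in auto)
      then show ?thesis by (simp add: sum_int_mod)
    qed
    show ?thesis unfolding box_dist_def marginal_if_const using eq[of "f s"] eq[of "f s'"] by simp
  qed
qed

definition ind :: "nat set \<Rightarrow> nat \<Rightarrow> int" where
  "ind A j = (if j \<in> A then 1 else 0)"

lemma ind_sum:
  assumes "A \<subseteq> {..<n}"
  shows "(\<Sum>j<n. ind A j * int (m j)) = int (\<Sum>j\<in>A. m j)"
proof -
  have "(\<Sum>j<n. ind A j * int (m j)) = (\<Sum>j<n. if j \<in> A then int (m j) else 0)"
    unfolding ind_def by (rule sum.cong) auto
  also have "\<dots> = (\<Sum>j\<in>{..<n} \<inter> A. int (m j))" by (simp add: sum.If_cases)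
  also have "{..<n} \<inter> A = A" using assms by auto
  finally show ?thesis by simp
qed

lemma ind_mod:
  assumes "A \<subseteq> {..<n}"
  shows "((\<Sum>j\<in>A. m j) mod d = v mod d) \<longleftrightarrow> ((\<Sum>j<n. ind A j * int (m j)) mod int d = int v mod int d)"
  unfolding ind_sum[OF assms] by (metis of_nat_eq_iff zmod_int)

lemma cop_one: "coprime (ind A j) (int d)" if "j \<in> A" using that by (simp add: ind_def)

lemma sum_AB:
  fixes n :: nat and m :: "nat \<Rightarrow> nat"
  assumes "A \<inter> B = {}" "A \<union> B = {..<n}"
  shows "(\<Sum>j<n. m j) = (\<Sum>j\<in>A. m j) + (\<Sum>j\<in>B. m j)"
proof -
  have "finite (A \<union> B)" using assms by simp
  then have "finite A" "finite B" by auto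
  then show ?thesis using assms by (metis sum.union_disjoint)
qed

lemma bip_nonunique:
  assumes n: "n \<ge> 2" and d: "d \<ge> 2" and c: "\<forall>j<n. c j \<ge> 2"
    and bl: "bipartite_linear n d c f"
  shows "\<exists>p. is_cond_dist n d c p \<and> non_signaling n d c p
            \<and> (\<forall>s\<in>Ins n c. prob_sum_eq n d f p s = 1)
            \<and> \<not> (\<forall>s\<in>Ins n c. \<forall>m\<in>Outs n d. p m s = box_dist n d f m s)"
proof -
  obtain A B fA fB where AB: "A \<noteq> {}" "B \<noteq> {}" "A \<inter> B = {}" "A \<union> B = {..<n}"
    and ff: "\<forall>s\<in>Ins n c. fA (restrict s A) < d \<and> fB (restrict s B) < d \<and>
                    f s mod d = (fA (restrict s A) + fB (restrict s B)) mod d"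
    using bl unfolding bipartite_linear_def by blast
  have Asub: "A \<subseteq> {..<n}" and Bsub: "B \<subseteq> {..<n}" using AB by auto
  obtain a0 where a0: "a0 \<in> A" using AB by blast
  obtain b0 where b0: "b0 \<in> B" using AB by blast
  have a0n: "a0 < n" "a0 \<notin> B" and b0n: "b0 < n" "b0 \<notin> A" using a0 b0 AB by auto
  have d0: "d > 0" using d by simp
  define K :: real where "K = 1 / real d ^ (n - 2)"
  define G where "G m s \<longleftrightarrow> (\<Sum>j\<in>A. m j) mod d = fA (restrict s A) mod d
       \<and> (\<Sum>j\<in>B. m j) mod d = fB (restrict s B) mod d" for m s :: "nat \<Rightarrow> nat"
  define p where "p m s = (if G m s then K else 0)" for m s
  define M where "M R \<alpha> \<beta> = card {m\<in>Outs n d. R m \<and> (\<Sum>j\<in>A. m j) mod d = \<alpha> mod d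
       \<and> (\<Sum>j\<in>B. m j) mod d = \<beta> mod d}" for R \<alpha> \<beta>
  have MA: "M R \<alpha> \<beta> = M R \<alpha>' \<beta>" if R: "\<forall>t v. R (t(a0 := v)) = R t" for R \<alpha> \<alpha>' \<beta>
  proof -
    have e: "M R x \<beta> = card {m\<in>Outs n d. (R m \<and> (\<Sum>j\<in>B. m j) mod d = \<beta> mod d) \<and>
        (\<Sum>j<n. ind A j * int (m j)) mod int d = int x mod int d}" for x
      unfolding M_def ind_mod[OF Asub, symmetric] by (intro arg_cong[where f=card] Collect_cong) auto
    have sB: "(\<Sum>j\<in>B. (t(a0:=v)) j) = (\<Sum>j\<in>B. t j)" for t :: "nat \<Rightarrow> nat" and v
      using a0n by (intro sum.cong) auto
    have "\<forall>t v. (R (t(a0 := v)) \<and> (\<Sum>j\<in>B. (t(a0:=v)) j) mod d = \<beta> mod d) =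
                (R t \<and> (\<Sum>j\<in>B. t j) mod d = \<beta> mod d)" using R sB by (simp del: fun_upd_apply)
    note sc = shift_count[where w="ind A" and Q="\<lambda>t. R t \<and> (\<Sum>j\<in>B. t j) mod d = \<beta> mod d", OF d0 a0n(1) cop_one[OF a0] this]
    show ?thesis unfolding e sc ..
  qed
  have MB: "M R \<alpha> \<beta> = M R \<alpha> \<beta>'" if R: "\<forall>t v. R (t(b0 := v)) = R t" for R \<alpha> \<beta> \<beta>'
  proof -
    have e: "M R \<alpha> x = card {m\<in>Outs n d. (R m \<and> (\<Sum>j\<in>A. m j) mod d = \<alpha> mod d) \<and>
        (\<Sum>j<n. ind B j * int (m j)) mod int d = int x mod int d}" for x
      unfolding M_def ind_mod[OF Bsub, symmetric] by (intro arg_cong[where f=card] Collect_cong) auto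
    have sA: "(\<Sum>j\<in>A. (t(b0:=v)) j) = (\<Sum>j\<in>A. t j)" for t :: "nat \<Rightarrow> nat" and v
      using b0n by (intro sum.cong) auto
    have "\<forall>t v. (R (t(b0 := v)) \<and> (\<Sum>j\<in>A. (t(b0:=v)) j) mod d = \<alpha> mod d) =
                (R t \<and> (\<Sum>j\<in>A. t j) mod d = \<alpha> mod d)" using R sA by (simp del: fun_upd_apply)
    note sc = shift_count[where w="ind B" and Q="\<lambda>t. R t \<and> (\<Sum>j\<in>A. t j) mod d = \<alpha> mod d", OF d0 b0n(1) cop_one[OF b0] this]
    show ?thesis unfolding e sc ..
  qed
  have Mtot: "M (\<lambda>_. True) \<alpha> \<beta> = d ^ (n - 2)" for \<alpha> \<beta>
  proof -
    have sB: "(\<Sum>j\<in>B. (t(a0:=v)) j) = (\<Sum>j\<in>B. t j)" for t :: "nat \<Rightarrow> nat" and v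
      using a0n by (intro sum.cong) auto
    have "d * card {m\<in>Outs n d. (\<Sum>j\<in>B. m j) mod d = \<beta> mod d \<and>
        (\<Sum>j<n. ind A j * int (m j)) mod int d = int \<alpha> mod int d}
       = card {m\<in>Outs n d. (\<Sum>j\<in>B. m j) mod d = \<beta> mod d}"
      by (rule count_uniform[where w="ind A" and Q="\<lambda>m. (\<Sum>j\<in>B. m j) mod d = \<beta> mod d", OF d0 a0n(1) cop_one[OF a0]]) (simp add: sB del: fun_upd_apply)
    moreover have "d * card {m\<in>Outs n d. True \<and>
        (\<Sum>j<n. ind B j * int (m j)) mod int d = int \<beta> mod int d}
       = card {m\<in>Outs n d. True}"
      by (rule count_uniform[where w="ind B" and Q="\<lambda>m. True", OF d0 b0n(1) cop_one[OF b0]]) simp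
    ultimately have "d * (d * M (\<lambda>_. True) \<alpha> \<beta>) = d ^ n"
      unfolding M_def ind_mod[OF Asub, symmetric] ind_mod[OF Bsub, symmetric]
      by (simp add: conj_commute card_Outs)
    moreover have "d ^ n = d * (d * d ^ (n - 2))"
    proof -
      have "n = Suc (Suc (n - 2))" using n by simp
      then have "d ^ n = d ^ Suc (Suc (n - 2))" by (rule arg_cong)
      then show ?thesis by simp
    qed
    ultimately show ?thesis using d0 by simp
  qed
  have sum_p: "(\<Sum>m\<in>Outs n d. p m s) = 1" for s
  proof -
    have "(\<Sum>m\<in>Outs n d. p m s) = K * card {m\<in>Outs n d. G m s}"
      unfolding p_def by (rule sum_if_const[OF finite_Outs])
    also have "card {m\<in>Outs n d. G m s} = M (\<lambda>_. True) (fA (restrict s A)) (fB (restrict s B))"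
      unfolding M_def G_def by simp
    finally show ?thesis using Mtot d0 unfolding K_def by simp
  qed
  have cd: "is_cond_dist n d c p"
    unfolding is_cond_dist_def using sum_p by (auto simp: p_def K_def)
  have pr: "prob_sum_eq n d f p s = 1" if s: "s \<in> Ins n c" for s
  proof -
    have "prob_sum_eq n d f p s = (\<Sum>m\<in>Outs n d. p m s)"
      unfolding prob_sum_eq_def
    proof (rule sum.mono_neutral_left[OF finite_Outs])
      show "{m \<in> Outs n d. (\<Sum>j<n. m j) mod d = f s mod d} \<subseteq> Outs n d" by auto
      show "\<forall>i\<in>Outs n d - {m \<in> Outs n d. (\<Sum>j<n. m j) mod d = f s mod d}. p i s = 0"
      proof
        fix m assume m: "m \<in> Outs n d - {m \<in> Outs n d. (\<Sum>j<n. m j) mod d = f s mod d}"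
        show "p m s = 0"
        proof (rule ccontr)
          assume "p m s \<noteq> 0"
          then have "G m s" unfolding p_def by (auto split: if_splits)
          then have g: "(\<Sum>j\<in>A. m j) mod d = fA (restrict s A) mod d"
              "(\<Sum>j\<in>B. m j) mod d = fB (restrict s B) mod d" unfolding G_def by auto
          have "(\<Sum>j<n. m j) mod d = ((\<Sum>j\<in>A. m j) mod d + (\<Sum>j\<in>B. m j) mod d) mod d"
            unfolding sum_AB[OF AB(3,4)] by (simp add: mod_add_eq)
          also have "\<dots> = (fA (restrict s A) mod d + fB (restrict s B) mod d) mod d" unfolding g ..
          also have "\<dots> = (fA (restrict s A) + fB (restrict s B)) mod d" by (simp add: mod_add_eq)
          also have "\<dots> = f s mod d" using ff s by simp
          finally have "(\<Sum>j<n. m j) mod d = f s mod d" .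
          then show False using m by auto
        qed
      qed
    qed
    then show ?thesis using sum_p by simp
  qed
  have ns: "non_signaling n d c p"
    unfolding non_signaling_def
  proof safe
    fix S s s' mS
    assume S: "S \<subseteq> {..<n}" and s: "s \<in> Ins n c" and s': "s' \<in> Ins n c"
      and r: "restrict s S = restrict s' S"
    define R where "R m \<longleftrightarrow> restrict m S = mS" for m :: "nat \<Rightarrow> nat"
    have mar: "marginal n d p S x mS = K * M R (fA (restrict x A)) (fB (restrict x B))" for x
      unfolding p_def marginal_if_const M_def R_def G_def by simp
    have step1: "M R (fA (restrict s A)) \<beta> = M R (fA (restrict s' A)) \<beta>" for \<beta>
    proof (cases "A \<subseteq> S")
      case True
      have "restrict s A = restrict s' A"
      proof (rule ext)
        fix i show "restrict s A i = restrict s' A i" using fun_cong[OF r, of i] True by (auto simp: restrict_def)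
      qed
      then show ?thesis by simp
    next
      case False
      then obtain a where a: "a \<in> A" "a \<notin> S" by blast
      have allx: "M R x \<beta> = M R 0 \<beta>" for x
      proof -
        have an: "a < n" "a \<notin> B" using a AB by auto
        have e: "M R y \<beta> = card {m\<in>Outs n d. (R m \<and> (\<Sum>j\<in>B. m j) mod d = \<beta> mod d) \<and>
            (\<Sum>j<n. ind A j * int (m j)) mod int d = int y mod int d}" for y
          unfolding M_def ind_mod[OF Asub, symmetric] by (intro arg_cong[where f=card] Collect_cong) auto
        have sB: "(\<Sum>j\<in>B. (t(a:=v)) j) = (\<Sum>j\<in>B. t j)" for t :: "nat \<Rightarrow> nat" and v
          using an by (intro sum.cong) auto
        have "\<forall>t v. (R (t(a := v)) \<and> (\<Sum>j\<in>B. (t(a:=v)) j) mod d = \<beta> mod d) =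
                    (R t \<and> (\<Sum>j\<in>B. t j) mod d = \<beta> mod d)"
          using sB a(2) restrict_upd_out unfolding R_def by (simp del: fun_upd_apply)
        note sc = shift_count[where w="ind A" and Q="\<lambda>t. R t \<and> (\<Sum>j\<in>B. t j) mod d = \<beta> mod d", OF d0 an(1) cop_one[OF a(1)] this]
        show ?thesis unfolding e sc ..
      qed
      show ?thesis using allx[of "fA (restrict s A)"] allx[of "fA (restrict s' A)"] by simp
    qed
    have step2: "M R \<alpha> (fB (restrict s B)) = M R \<alpha> (fB (restrict s' B))" for \<alpha>
    proof (cases "B \<subseteq> S")
      case True
      have "restrict s B = restrict s' B"
      proof (rule ext)
        fix i show "restrict s B i = restrict s' B i" using fun_cong[OF r, of i] True by (auto simp: restrict_def)
      qed
      then show ?thesis by simp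
    next
      case False
      then obtain b where b: "b \<in> B" "b \<notin> S" by blast
      have allx: "M R \<alpha> x = M R \<alpha> 0" for x
      proof -
        have bn: "b < n" "b \<notin> A" using b AB by auto
        have e: "M R \<alpha> y = card {m\<in>Outs n d. (R m \<and> (\<Sum>j\<in>A. m j) mod d = \<alpha> mod d) \<and>
            (\<Sum>j<n. ind B j * int (m j)) mod int d = int y mod int d}" for y
          unfolding M_def ind_mod[OF Bsub, symmetric] by (intro arg_cong[where f=card] Collect_cong) auto
        have sA: "(\<Sum>j\<in>A. (t(b:=v)) j) = (\<Sum>j\<in>A. t j)" for t :: "nat \<Rightarrow> nat" and v
          using bn by (intro sum.cong) auto
        have "\<forall>t v. (R (t(b := v)) \<and> (\<Sum>j\<in>A. (t(b:=v)) j) mod d = \<alpha> mod d) =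
                    (R t \<and> (\<Sum>j\<in>A. t j) mod d = \<alpha> mod d)"
          using sA b(2) restrict_upd_out unfolding R_def by (simp del: fun_upd_apply)
        note sc = shift_count[where w="ind B" and Q="\<lambda>t. R t \<and> (\<Sum>j\<in>A. t j) mod d = \<alpha> mod d", OF d0 bn(1) cop_one[OF b(1)] this]
        show ?thesis unfolding e sc ..
      qed
      show ?thesis using allx[of "fB (restrict s B)"] allx[of "fB (restrict s' B)"] by simp
    qed
    show "marginal n d p S s mS = marginal n d p S s' mS"
      unfolding mar using step1[of "fB (restrict s B)"] step2[of "fA (restrict s' A)"] by simp
  qed
  define s0 :: "nat \<Rightarrow> nat" where "s0 = (\<lambda>j. if j < n then 0 else undefined)"
  have s0I: "s0 \<in> Ins n c" unfolding s0_def Ins_def using c by (auto simp: PiE_iff extensional_def)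
  define m0 :: "nat \<Rightarrow> nat" where "m0 = (\<lambda>j. if j = a0 then fA (restrict s0 A) else if j = b0 then fB (restrict s0 B)
     else if j < n then 0 else undefined)"
  have m0O: "m0 \<in> Outs n d" unfolding m0_def Outs_def using ff s0I a0n b0n d0
    by (auto simp: PiE_iff extensional_def)
  have mA: "(\<Sum>j\<in>A. m0 j) = fA (restrict s0 A)"
  proof -
    have "(\<Sum>j\<in>A. m0 j) = m0 a0 + (\<Sum>j\<in>A - {a0}. m0 j)"
      by (rule sum.remove[OF finite_subset[OF Asub] a0]) simp
    moreover have "(\<Sum>j\<in>A - {a0}. m0 j) = 0" using b0n Asub unfolding m0_def by (intro sum.neutral) auto
    ultimately show ?thesis unfolding m0_def by simp
  qed
  have mB: "(\<Sum>j\<in>B. m0 j) = fB (restrict s0 B)"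
  proof -
    have "(\<Sum>j\<in>B. m0 j) = m0 b0 + (\<Sum>j\<in>B - {b0}. m0 j)"
      by (rule sum.remove[OF finite_subset[OF Bsub] b0]) simp
    moreover have "(\<Sum>j\<in>B - {b0}. m0 j) = 0" using a0n Bsub unfolding m0_def by (intro sum.neutral) auto
    moreover have "b0 \<noteq> a0" using a0 b0n by auto
    ultimately show ?thesis unfolding m0_def using b0n by simp
  qed
  have G0: "G m0 s0" unfolding G_def mA mB by simp
  have good0: "(\<Sum>j<n. m0 j) mod d = f s0 mod d"
    unfolding sum_AB[OF AB(3,4)] mA mB using ff s0I by simp
  have "p m0 s0 \<noteq> box_dist n d f m0 s0"
  proof -
    have "p m0 s0 = 1 / real d ^ (n - 2)" using G0 unfolding p_def K_def by simp
    moreover have "box_dist n d f m0 s0 = 1 / real d ^ (n - 1)" using good0 unfolding box_dist_def by simp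
    moreover have "real d ^ (n - 2) < real d ^ (n - 1)" using d n by (intro power_strict_increasing) auto
    then have "real d ^ (n - 2) \<noteq> real d ^ (n - 1)" by simp
    then have "1 / real d ^ (n - 2) \<noteq> 1 / real d ^ (n - 1)" by simp
    ultimately show ?thesis by simp
  qed
  then have nb: "\<not> (\<forall>s\<in>Ins n c. \<forall>m\<in>Outs n d. p m s = box_dist n d f m s)" using s0I m0O by blast
  show ?thesis
    by (rule exI[of _ p]) (intro conjI cd ns nb ballI pr)
qed

lemma Ins_upd: "s \<in> Ins n c \<Longrightarrow> j < n \<Longrightarrow> v < c j \<Longrightarrow> s(j:=v) \<in> Ins n c"
  unfolding Ins_def by (auto simp: PiE_iff extensional_def)

lemma Ins_ext: "s \<in> Ins n c \<Longrightarrow> \<not> i < n \<Longrightarrow> s i = undefined"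
  unfolding Ins_def by (auto simp: PiE_iff extensional_def)

lemma Ins_lt: "s \<in> Ins n c \<Longrightarrow> i < n \<Longrightarrow> s i < c i"
  unfolding Ins_def by (auto simp: PiE_iff)

lemma Ins_connect:
  assumes s: "s \<in> Ins n c" and s': "s' \<in> Ins n c" and agree: "\<forall>i<n. i \<notin> K \<longrightarrow> s i = s' i"
    and P: "P s"
    and cl: "\<And>u k v. u \<in> Ins n c \<Longrightarrow> k \<in> K \<Longrightarrow> k < n \<Longrightarrow> v < c k \<Longrightarrow> P u \<Longrightarrow> P (u(k:=v))"
  shows "P s'"
proof -
  have "\<forall>u. u \<in> Ins n c \<and> (\<forall>i<n. i \<notin> K \<longrightarrow> u i = s' i) \<and> P u \<and> card {i. i < n \<and> u i \<noteq> s' i} = N \<longrightarrow> P s'" for N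
  proof (induction N)
    case 0
    show ?case
    proof safe
      fix u assume u: "u \<in> Ins n c" "P u" "card {i. i < n \<and> u i \<noteq> s' i} = 0"
      have "{i. i < n \<and> u i \<noteq> s' i} = {}" using u(3) by (simp add: card_eq_0_iff)
      have "u = s'"
      proof (rule ext)
        fix i show "u i = s' i"
        proof (cases "i < n")
          case True then show ?thesis using \<open>{i. i < n \<and> u i \<noteq> s' i} = {}\<close> by blast
        next
          case False then show ?thesis using Ins_ext[OF u(1)] Ins_ext[OF s'] by simp
        qed
      qed
      then show "P s'" using u by simp
    qed
  next
    case (Suc N)
    show ?case
    proof safe
      fix u assume u: "u \<in> Ins n c" "\<forall>i<n. i \<notin> K \<longrightarrow> u i = s' i" "P u"
        "card {i. i < n \<and> u i \<noteq> s' i} = Suc N"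
      have "{i. i < n \<and> u i \<noteq> s' i} \<noteq> {}" using u(4) by (metis card.empty nat.distinct(1))
      then obtain i where i: "i < n" "u i \<noteq> s' i" by blast
      have iK: "i \<in> K" using i u(2) by auto
      define u' where "u' = u(i := s' i)"
      have u'I: "u' \<in> Ins n c" unfolding u'_def using Ins_upd[OF u(1) i(1)] Ins_lt[OF s' i(1)] by blast
      have Pu': "P u'" unfolding u'_def using cl[OF u(1) iK i(1) Ins_lt[OF s' i(1)] u(3)] .
      have ag: "\<forall>i<n. i \<notin> K \<longrightarrow> u' i = s' i" using u(2) unfolding u'_def by auto
      have "{j. j < n \<and> u' j \<noteq> s' j} = {j. j < n \<and> u j \<noteq> s' j} - {i}" unfolding u'_def by auto
      then have "card {j. j < n \<and> u' j \<noteq> s' j} = N" using u(4) i by (simp add: card_Diff_singleton)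
      then show "P s'" using Suc.IH u'I ag Pu' by blast
    qed
  qed
  then show ?thesis using s agree P by blast
qed

definition cross :: "nat set \<Rightarrow> (nat \<Rightarrow> nat) \<Rightarrow> (nat \<Rightarrow> nat) \<Rightarrow> nat \<Rightarrow> nat" where
  "cross A x y = (\<lambda>i. if i \<in> A then x i else y i)"

lemma cross_Ins: "x \<in> Ins n c \<Longrightarrow> y \<in> Ins n c \<Longrightarrow> cross A x y \<in> Ins n c"
  unfolding Ins_def cross_def by (auto simp: PiE_iff extensional_def)

lemma cong_rearr:
  fixes a b c e m :: int
  assumes "[a + b = c + e] (mod m)" shows "[e - b = a - c] (mod m)"
proof -
  have "[(a + b) - (b + c) = (c + e) - (b + c)] (mod m)" using cong_diff[OF assms cong_refl] .
  moreover have "(a + b) - (b + c) = a - c" "(c + e) - (b + c) = e - b" by simp_all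
  ultimately show ?thesis by (metis cong_sym)
qed

lemma cong_chain:
  fixes a b c e x y m :: int
  assumes "[a - b = c - e] (mod m)" "[b - x = e - y] (mod m)" shows "[a - x = c - y] (mod m)"
proof -
  have "[(a - b) + (b - x) = (c - e) + (e - y)] (mod m)" using cong_add[OF assms] .
  moreover have "(a - b) + (b - x) = a - x" "(c - e) + (e - y) = c - y" by simp_all
  ultimately show ?thesis by metis
qed

lemma cong_rearr2:
  fixes a b c e m :: int
  assumes "[a - b = c - e] (mod m)" shows "[a = c + b - e] (mod m)"
proof -
  have "[(a - b) + b = (c - e) + b] (mod m)" using cong_add[OF assms cong_refl] .
  moreover have "(a - b) + b = a" "(c - e) + b = c + b - e" by simp_all
  ultimately show ?thesis by metis
qed

lemma mixed_to_bip:
  fixes f :: "(nat \<Rightarrow> nat) \<Rightarrow> nat"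
  assumes AB: "A \<noteq> {}" "B \<noteq> {}" "A \<inter> B = {}" "A \<union> B = {..<n}"
    and c: "\<forall>j<n. c j > 0" and d: "d > 0"
    and mixed: "\<And>s j k v u. s \<in> Ins n c \<Longrightarrow> j \<in> A \<Longrightarrow> k \<in> B \<Longrightarrow> v < c j \<Longrightarrow> u < c k \<Longrightarrow>
        [int (f (s(j:=v))) + int (f (s(k:=u))) = int (f s) + int (f (s(j:=v, k:=u)))] (mod int d)"
  shows "bipartite_linear n d c f"
proof -
  define F where "F s = int (f s)" for s
  define s0 :: "nat \<Rightarrow> nat" where "s0 = (\<lambda>j. if j < n then 0 else undefined)"
  have s0I: "s0 \<in> Ins n c" unfolding s0_def Ins_def using c by (auto simp: PiE_iff extensional_def)
  have An: "A \<subseteq> {..<n}" "B \<subseteq> {..<n}" using AB by auto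
  have step1: "[F (u'(j:=v)) - F u' = F (u(j:=v)) - F u] (mod int d)"
    if u: "u \<in> Ins n c" and u': "u' \<in> Ins n c" and ag: "\<forall>i<n. i \<notin> B \<longrightarrow> u i = u' i"
      and j: "j \<in> A" and v: "v < c j" for u u' j v
  proof (rule Ins_connect[OF u u' ag, where P="\<lambda>x. [F (x(j:=v)) - F x = F (u(j:=v)) - F u] (mod int d)"])
    show "[F (u(j:=v)) - F u = F (u(j:=v)) - F u] (mod int d)" by simp
  next
    fix x k w assume x: "x \<in> Ins n c" and k: "k \<in> B" "k < n" and w: "w < c k"
      and P: "[F (x(j:=v)) - F x = F (u(j:=v)) - F u] (mod int d)"
    have jk: "j \<noteq> k" using j k AB by auto
    have m: "[F (x(j:=v)) + F (x(k:=w)) = F x + F (x(j:=v, k:=w))] (mod int d)"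
      using mixed[OF x j k(1) v w] unfolding F_def .
    have tw: "x(k:=w, j:=v) = x(j:=v, k:=w)" using jk by (simp add: fun_upd_twist)
    have "[F (x(k:=w, j:=v)) - F (x(k:=w)) = F (x(j:=v)) - F x] (mod int d)"
      using cong_rearr[OF m] unfolding tw .
    then show "[F ((x(k:=w))(j:=v)) - F (x(k:=w)) = F (u(j:=v)) - F u] (mod int d)"
      using P by (rule cong_trans)
  qed
  have step2: "[F (cross A x y) - F (cross A s0 y) = F (cross A x y0) - F (cross A s0 y0)] (mod int d)"
    if x: "x \<in> Ins n c" and y: "y \<in> Ins n c" and y0: "y0 \<in> Ins n c" for x y y0
  proof -
    have xs: "cross A x s0 \<in> Ins n c" using cross_Ins[OF x s0I] .
    have "\<forall>i<n. i \<notin> A \<longrightarrow> s0 i = cross A x s0 i" unfolding cross_def by auto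
    have "[F (cross A (cross A x s0) y) - F (cross A s0 y) = F (cross A (cross A x s0) y0) - F (cross A s0 y0)] (mod int d)"
    proof (rule Ins_connect[OF s0I xs \<open>\<forall>i<n. i \<notin> A \<longrightarrow> s0 i = cross A x s0 i\<close>,
          where P="\<lambda>z. [F (cross A z y) - F (cross A s0 y) = F (cross A z y0) - F (cross A s0 y0)] (mod int d)"])
      show "[F (cross A s0 y) - F (cross A s0 y) = F (cross A s0 y0) - F (cross A s0 y0)] (mod int d)" by simp
    next
      fix z j v assume z: "z \<in> Ins n c" and j: "j \<in> A" "j < n" and v: "v < c j"
        and P: "[F (cross A z y) - F (cross A s0 y) = F (cross A z y0) - F (cross A s0 y0)] (mod int d)"
      have e1: "cross A (z(j:=v)) y = (cross A z y)(j:=v)" "cross A (z(j:=v)) y0 = (cross A z y0)(j:=v)"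
        using j unfolding cross_def by (auto simp: fun_eq_iff)
      have "[F ((cross A z y)(j:=v)) - F (cross A z y) = F ((cross A z y0)(j:=v)) - F (cross A z y0)] (mod int d)"
        by (rule step1[OF cross_Ins[OF z y0] cross_Ins[OF z y] _ j(1) v]) (use AB in \<open>auto simp: cross_def\<close>)
      then show "[F (cross A (z(j:=v)) y) - F (cross A s0 y) = F (cross A (z(j:=v)) y0) - F (cross A s0 y0)] (mod int d)"
        unfolding e1 using cong_chain[OF _ P] by blast
    qed
    moreover have "cross A (cross A x s0) y = cross A x y" "cross A (cross A x s0) y0 = cross A x y0"
      unfolding cross_def by auto
    ultimately show ?thesis by simp
  qed
  define fA where "fA x = f (\<lambda>i. if i \<in> A then x i else s0 i) mod d" for x
  define fB where "fB y = nat ((F (\<lambda>i. if i \<in> A then s0 i else y i) - F s0) mod int d)" for y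
  show ?thesis unfolding bipartite_linear_def
  proof (intro exI conjI)
    show "A \<noteq> {}" "B \<noteq> {}" "A \<inter> B = {}" "A \<union> B = {..<n}" using AB by auto
    show "\<forall>s\<in>Ins n c. fA (restrict s A) < d \<and> fB (restrict s B) < d \<and>
                    f s mod d = (fA (restrict s A) + fB (restrict s B)) mod d"
    proof
      fix s assume s: "s \<in> Ins n c"
      have e1: "(\<lambda>i. if i \<in> A then restrict s A i else s0 i) = cross A s s0"
        unfolding cross_def by auto
      have e2: "(\<lambda>i. if i \<in> A then s0 i else restrict s B i) = cross A s0 s"
      proof (rule ext)
        fix i show "(if i \<in> A then s0 i else restrict s B i) = cross A s0 s i"
        proof (cases "i \<in> A \<or> i \<in> B")
          case True then show ?thesis unfolding cross_def by auto
        next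
          case False
          then have "\<not> i < n" using AB by auto
          then show ?thesis using False Ins_ext[OF s] unfolding cross_def by auto
        qed
      qed
      have ss: "cross A s s = s" unfolding cross_def by auto
      have css: "cross A s0 s0 = s0" unfolding cross_def by auto
      have key: "[F s - F (cross A s0 s) = F (cross A s s0) - F s0] (mod int d)"
        using step2[OF s s s0I] unfolding ss css .
      have iA: "int (fA (restrict s A)) = F (cross A s s0) mod int d"
        unfolding fA_def e1 F_def by (rule zmod_int)
      have iB: "int (fB (restrict s B)) = (F (cross A s0 s) - F s0) mod int d"
        unfolding fB_def e2 using d by simp
      have "int ((fA (restrict s A) + fB (restrict s B)) mod d)
          = (F (cross A s s0) mod int d + (F (cross A s0 s) - F s0) mod int d) mod int d"
        unfolding zmod_int of_nat_add iA iB ..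
      also have "\<dots> = (F (cross A s s0) + F (cross A s0 s) - F s0) mod int d"
        by (simp only: mod_add_eq add_diff_eq)
      also have "\<dots> = F s mod int d"
        using cong_rearr2[OF key] unfolding cong_def by (rule sym)
      finally have "f s mod d = (fA (restrict s A) + fB (restrict s B)) mod d"
        unfolding F_def zmod_int[symmetric] of_nat_eq_iff by (rule sym)
      moreover have "fA (restrict s A) < d" unfolding fA_def using d by simp
      moreover have "fB (restrict s B) < d"
      proof -
        have "(F (cross A s0 s) - F s0) mod int d < int d" "0 \<le> (F (cross A s0 s) - F s0) mod int d"
          using d by simp_all
        then show ?thesis unfolding fB_def e2 by simp
      qed
      ultimately show "fA (restrict s A) < d \<and> fB (restrict s B) < d \<and>
                    f s mod d = (fA (restrict s A) + fB (restrict s B)) mod d" by simp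
    qed
  qed
qed

definition Lw :: "nat \<Rightarrow> (nat \<Rightarrow> int) \<Rightarrow> (nat \<Rightarrow> nat) \<Rightarrow> int" where
  "Lw n w m = (\<Sum>j<n. w j * int (m j))"

definition Dw :: "nat \<Rightarrow> nat \<Rightarrow> ((nat \<Rightarrow> nat) \<Rightarrow> (nat \<Rightarrow> nat) \<Rightarrow> real) \<Rightarrow> (nat \<Rightarrow> int) \<Rightarrow> (nat \<Rightarrow> nat) \<Rightarrow> int \<Rightarrow> real" where
  "Dw n d p w s z = (\<Sum>m\<in>{m\<in>Outs n d. Lw n w m mod int d = z mod int d}. p m s)"

lemma zero_bad:
  assumes cd: "is_cond_dist n d c p" and pr: "prob_sum_eq n d f p s = 1" and s: "s \<in> Ins n c"
    and m: "m \<in> Outs n d" and bad: "(\<Sum>j<n. m j) mod d \<noteq> f s mod d"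
  shows "p m s = 0"
proof -
  define G where "G = {m\<in>Outs n d. (\<Sum>j<n. m j) mod d = f s mod d}"
  have tot: "(\<Sum>m\<in>Outs n d. p m s) = 1" using cd s unfolding is_cond_dist_def by blast
  have "(\<Sum>m\<in>Outs n d. p m s) = (\<Sum>m\<in>Outs n d - G. p m s) + (\<Sum>m\<in>G. p m s)"
    by (rule sum.subset_diff) (auto simp: G_def finite_Outs)
  moreover have "(\<Sum>m\<in>G. p m s) = 1" using pr unfolding prob_sum_eq_def G_def .
  ultimately have z: "(\<Sum>m\<in>Outs n d - G. p m s) = 0" using tot by simp
  have nn: "\<And>x. x \<in> Outs n d - G \<Longrightarrow> 0 \<le> p x s" using cd s unfolding is_cond_dist_def by blast
  have "\<forall>x\<in>Outs n d - G. p x s = 0"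
    using sum_nonneg_eq_0_iff[of "Outs n d - G" "\<lambda>x. p x s", OF _ nn] z finite_Outs by auto
  moreover have "m \<in> Outs n d - G" using m bad unfolding G_def by auto
  ultimately show ?thesis by blast
qed

lemma Lw_restrict:
  assumes "S = {j. j < n \<and> w j mod int d \<noteq> 0}"
  shows "Lw n w m mod int d = Lw n w (restrict m S) mod int d"
proof -
  have pt: "(w j * int (m j)) mod int d = (w j * int (restrict m S j)) mod int d" if "j < n" for j
  proof (cases "j \<in> S")
    case True then show ?thesis by simp
  next
    case False
    then have "w j mod int d = 0" using assms that by auto
    then have "(w j * int (m j)) mod int d = 0" "(w j * int (restrict m S j)) mod int d = 0"
      by (metis mod_mult_left_eq mult_zero_left mod_0)+
    then show ?thesis by simp
  qed
  have "Lw n w m mod int d = (\<Sum>j<n. (w j * int (m j)) mod int d) mod int d"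
    unfolding Lw_def by (rule mod_sum_eq[symmetric])
  also have "\<dots> = (\<Sum>j<n. (w j * int (restrict m S j)) mod int d) mod int d"
    by (rule arg_cong[where f="\<lambda>x. x mod int d"], rule sum.cong[OF refl], rule pt) simp
  also have "\<dots> = Lw n w (restrict m S) mod int d"
    unfolding Lw_def by (rule mod_sum_eq)
  finally show ?thesis .
qed

lemma D_marg:
  assumes "S = {j. j < n \<and> w j mod int d \<noteq> 0}"
  shows "Dw n d p w s z = (\<Sum>y\<in>(\<lambda>m. restrict m S) ` Outs n d.
      if Lw n w y mod int d = z mod int d then marginal n d p S s y else 0)"
proof -
  define P where "P y \<longleftrightarrow> Lw n w y mod int d = z mod int d" for y
  define R where "R = (\<lambda>m. restrict m S) ` Outs n d"
  have "Dw n d p w s z = (\<Sum>m\<in>Outs n d. if Lw n w m mod int d = z mod int d then p m s else 0)"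
    unfolding Dw_def by (rule sum.inter_filter[OF finite_Outs])
  also have "\<dots> = (\<Sum>m\<in>Outs n d. if P (restrict m S) then p m s else 0)"
  proof (rule sum.cong[OF refl])
    fix m
    have "Lw n w m mod int d = Lw n w (restrict m S) mod int d" by (rule Lw_restrict[OF assms])
    then show "(if Lw n w m mod int d = z mod int d then p m s else 0) = (if P (restrict m S) then p m s else 0)"
      unfolding P_def by simp
  qed
  also have "\<dots> = (\<Sum>y\<in>R. \<Sum>m\<in>{m\<in>Outs n d. restrict m S = y}. if P (restrict m S) then p m s else 0)"
    by (rule sum.group[symmetric]) (auto simp: R_def finite_Outs)
  also have "\<dots> = (\<Sum>y\<in>R. if P y then marginal n d p S s y else 0)"
  proof (rule sum.cong[OF refl])
    fix y assume "y \<in> R"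
    have "(\<Sum>m\<in>{m\<in>Outs n d. restrict m S = y}. if P (restrict m S) then p m s else 0)
        = (\<Sum>m\<in>{m\<in>Outs n d. restrict m S = y}. if P y then p m s else 0)"
      by (rule sum.cong) auto
    also have "\<dots> = (if P y then marginal n d p S s y else 0)"
      unfolding marginal_def by simp
    finally show "(\<Sum>m\<in>{m\<in>Outs n d. restrict m S = y}. if P (restrict m S) then p m s else 0)
        = (if P y then marginal n d p S s y else 0)" .
  qed
  finally show ?thesis unfolding R_def P_def .
qed

lemma D_local:
  assumes ns: "non_signaling n d c p" and s: "s \<in> Ins n c" and s': "s' \<in> Ins n c"
    and ag: "\<forall>j<n. w j mod int d \<noteq> 0 \<longrightarrow> s j = s' j"
  shows "Dw n d p w s z = Dw n d p w s' z"
proof -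
  define S where "S = {j. j < n \<and> w j mod int d \<noteq> 0}"
  have Ssub: "S \<subseteq> {..<n}" unfolding S_def by auto
  have r: "restrict s S = restrict s' S"
    using ag unfolding S_def by (auto simp: restrict_def fun_eq_iff)
  have mar: "marginal n d p S s y = marginal n d p S s' y" for y
    using ns Ssub s s' r unfolding non_signaling_def by blast
  show ?thesis unfolding D_marg[OF S_def] by (rule sum.cong[OF refl]) (simp add: mar)
qed

lemma mod_diff_right_cancel:
  fixes x y e m :: int
  shows "(x - e) mod m = (y - e) mod m \<longleftrightarrow> x mod m = y mod m"
proof
  assume h: "(x - e) mod m = (y - e) mod m"
  have "((x - e) + e) mod m = ((y - e) + e) mod m" by (rule mod_add_cong[OF h refl])
  then show "x mod m = y mod m" by simp
next
  assume h: "x mod m = y mod m"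
  show "(x - e) mod m = (y - e) mod m" by (rule mod_diff_cong[OF h refl])
qed

lemma D_shift:
  assumes cd: "is_cond_dist n d c p" and pr: "prob_sum_eq n d f p s = 1" and s: "s \<in> Ins n c"
  shows "Dw n d p w s z = Dw n d p (\<lambda>j. w j - a) s (z - a * int (f s))"
proof -
  have "(\<Sum>m\<in>Outs n d. if Lw n w m mod int d = z mod int d then p m s else 0)
      = (\<Sum>m\<in>Outs n d. if Lw n (\<lambda>j. w j - a) m mod int d = (z - a * int (f s)) mod int d then p m s else 0)"
  proof (rule sum.cong[OF refl])
    fix m assume m: "m \<in> Outs n d"
    show "(if Lw n w m mod int d = z mod int d then p m s else 0)
      = (if Lw n (\<lambda>j. w j - a) m mod int d = (z - a * int (f s)) mod int d then p m s else 0)"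
    proof (cases "(\<Sum>j<n. m j) mod d = f s mod d")
      case True
      have e: "Lw n (\<lambda>j. w j - a) m = Lw n w m - a * (\<Sum>j<n. int (m j))"
        unfolding Lw_def by (simp add: algebra_simps sum_subtractf sum_distrib_left)
      have "(\<Sum>j<n. int (m j)) mod int d = int (f s) mod int d"
        using True by (metis of_nat_sum zmod_int)
      then have "(a * (\<Sum>j<n. int (m j))) mod int d = (a * int (f s)) mod int d"
        by (metis mod_mult_right_eq)
      then have "(Lw n (\<lambda>j. w j - a) m) mod int d = (Lw n w m - a * int (f s)) mod int d"
        unfolding e by (rule mod_diff_cong[OF refl])
      then show ?thesis by (simp add: mod_diff_right_cancel)
    next
      case False
      then have "p m s = 0" using zero_bad[OF cd pr s m] by blast
      then show ?thesis by simp
    qed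
  qed
  then show ?thesis unfolding Dw_def by (simp add: sum.inter_filter[OF finite_Outs])
qed

lemma D_coord:
  assumes cd: "is_cond_dist n d c p" and pr: "\<forall>s\<in>Ins n c. prob_sum_eq n d f p s = 1"
    and ns: "non_signaling n d c p" and s: "s \<in> Ins n c" and j: "j < n" and v: "v < c j"
  shows "Dw n d p w (s(j:=v)) z = Dw n d p w s (z + w j * (int (f s) - int (f (s(j:=v)))))"
proof -
  define s' where "s' = s(j:=v)"
  have s'I: "s' \<in> Ins n c" unfolding s'_def using Ins_upd[OF s j v] .
  define w' where "w' = (\<lambda>i. w i - w j)"
  have "Dw n d p w s' z = Dw n d p w' s' (z - w j * int (f s'))"
    unfolding w'_def using D_shift[OF cd _ s'I] pr s'I by blast
  also have "\<dots> = Dw n d p w' s (z - w j * int (f s'))"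
    by (rule D_local[OF ns s'I s]) (auto simp: w'_def s'_def)
  also have "\<dots> = Dw n d p w s (z - w j * int (f s') + w j * int (f s))"
  proof -
    have pr_s: "prob_sum_eq n d f p s = 1" using pr s by blast
    have "Dw n d p w s (z - w j * int (f s') + w j * int (f s))
        = Dw n d p w' s (z - w j * int (f s') + w j * int (f s) - w j * int (f s))"
      unfolding w'_def by (rule D_shift[OF cd pr_s s])
    then show ?thesis by simp
  qed
  finally show ?thesis unfolding s'_def by (simp add: algebra_simps)
qed

lemma D_sum:
  assumes cd: "is_cond_dist n d c p" and s: "s \<in> Ins n c" and d: "d > 0"
  shows "(\<Sum>z\<in>{0..<int d}. Dw n d p w s z) = 1"
proof -
  have "(\<Sum>z\<in>{0..<int d}. \<Sum>m\<in>{m\<in>Outs n d. Lw n w m mod int d = z}. p m s) = (\<Sum>m\<in>Outs n d. p m s)"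
    by (rule sum.group) (use d in \<open>auto simp: finite_Outs\<close>)
  also have "\<dots> = 1" using cd s unfolding is_cond_dist_def by blast
  finally have "(\<Sum>z\<in>{0..<int d}. \<Sum>m\<in>{m\<in>Outs n d. Lw n w m mod int d = z}. p m s) = 1" .
  moreover have "(\<Sum>z\<in>{0..<int d}. Dw n d p w s z) = (\<Sum>z\<in>{0..<int d}. \<Sum>m\<in>{m\<in>Outs n d. Lw n w m mod int d = z}. p m s)"
    unfolding Dw_def by (rule sum.cong) auto
  ultimately show ?thesis by simp
qed

lemma D_uniform_period:
  assumes cd: "is_cond_dist n d c p" and s: "s \<in> Ins n c" and d: "d > 0"
    and per: "\<forall>y. Dw n d p w s y = Dw n d p w s (y + u)" and cop: "coprime u (int d)"
  shows "Dw n d p w s z = 1 / real d"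
proof -
  have hm: "\<forall>z. Dw n d p w s z = Dw n d p w s (z mod int d)" unfolding Dw_def by simp
  have hu: "\<forall>z. Dw n d p w s (z + u) = Dw n d p w s z" using per by simp
  have c: "Dw n d p w s y = Dw n d p w s 0" for y by (rule periodic[OF d hm hu cop])
  have "(\<Sum>z\<in>{0..<int d}. Dw n d p w s z) = (\<Sum>z\<in>{0..<int d}. Dw n d p w s 0)"
    by (rule sum.cong[OF refl], rule c)
  also have "\<dots> = real d * Dw n d p w s 0" by simp
  finally have "(\<Sum>z\<in>{0..<int d}. Dw n d p w s z) = real d * Dw n d p w s 0" .
  then have "real d * Dw n d p w s 0 = 1" using D_sum[OF cd s d] by simp
  moreover have "Dw n d p w s z = Dw n d p w s 0" by (rule c)
  ultimately show ?thesis using d by (simp add: field_simps)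
qed

lemma D_square:
  assumes cd: "is_cond_dist n d c p" and pr: "\<forall>s\<in>Ins n c. prob_sum_eq n d f p s = 1"
    and ns: "non_signaling n d c p" and s: "s \<in> Ins n c" and j: "j < n" and k: "k < n" and jk: "j \<noteq> k"
    and v: "v < c j" and u: "u < c k"
  shows "Dw n d p w s y = Dw n d p w s (y + (w j - w k) * (int (f (s(j:=v))) + int (f (s(k:=u)))
           - int (f s) - int (f (s(j:=v, k:=u)))))"
proof -
  define F where "F x = int (f x)" for x
  define s1 where "s1 = s(j:=v)"
  define s2 where "s2 = s(k:=u)"
  define s12 where "s12 = s(j:=v, k:=u)"
  have s1I: "s1 \<in> Ins n c" unfolding s1_def using Ins_upd[OF s j v] .
  have s2I: "s2 \<in> Ins n c" unfolding s2_def using Ins_upd[OF s k u] .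
  have e1: "s12 = s1(k:=u)" unfolding s12_def s1_def ..
  have e2: "s12 = s2(j:=v)" unfolding s12_def s2_def using jk by (simp add: fun_upd_twist)
  define z where "z = y - w k * (F s1 - F s12) - w j * (F s - F s1)"
  have "Dw n d p w s12 z = Dw n d p w s1 (z + w k * (F s1 - F s12))"
    unfolding e1 F_def by (rule D_coord[OF cd pr ns s1I k u])
  also have "\<dots> = Dw n d p w s (z + w k * (F s1 - F s12) + w j * (F s - F s1))"
    unfolding s1_def F_def by (rule D_coord[OF cd pr ns s j v])
  also have "z + w k * (F s1 - F s12) + w j * (F s - F s1) = y" unfolding z_def by simp
  finally have a: "Dw n d p w s12 z = Dw n d p w s y" .
  have "Dw n d p w s12 z = Dw n d p w s2 (z + w j * (F s2 - F s12))"
    unfolding e2 F_def by (rule D_coord[OF cd pr ns s2I j v])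
  also have "\<dots> = Dw n d p w s (z + w j * (F s2 - F s12) + w k * (F s - F s2))"
    unfolding s2_def F_def by (rule D_coord[OF cd pr ns s k u])
  also have "z + w j * (F s2 - F s12) + w k * (F s - F s2) = y + (w j - w k) * (F s1 + F s2 - F s - F s12)"
    unfolding z_def by (simp add: algebra_simps)
  finally have b: "Dw n d p w s12 z = Dw n d p w s (y + (w j - w k) * (F s1 + F s2 - F s - F s12))" .
  have "Dw n d p w s y = Dw n d p w s12 z" using a by (rule sym)
  also note b
  finally show ?thesis unfolding F_def s1_def s2_def s12_def .
qed

lemma D_all_uniform:
  assumes cd: "is_cond_dist n d c p" and pr: "\<forall>s\<in>Ins n c. prob_sum_eq n d f p s = 1"
    and ns: "non_signaling n d c p" and s0: "s0 \<in> Ins n c" and u0: "\<forall>z. Dw n d p w s0 z = 1 / real d"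
    and s: "s \<in> Ins n c"
  shows "Dw n d p w s z = 1 / real d"
proof -
  have "\<forall>z. Dw n d p w s z = 1 / real d"
  proof (rule Ins_connect[where K="{..<n}" and P="\<lambda>x. \<forall>z. Dw n d p w x z = 1 / real d", OF s0 s _ u0])
    show "\<forall>i<n. i \<notin> {..<n} \<longrightarrow> s0 i = s i" by auto
  next
    fix u k v assume u: "u \<in> Ins n c" and k: "k \<in> {..<n}" "k < n" and v: "v < c k"
      and P: "\<forall>z. Dw n d p w u z = 1 / real d"
    show "\<forall>z. Dw n d p w (u(k := v)) z = 1 / real d"
    proof
      fix z
      have "Dw n d p w (u(k := v)) z = Dw n d p w u (z + w k * (int (f u) - int (f (u(k:=v)))))"
        by (rule D_coord[OF cd pr ns u k(2) v])
      also have "\<dots> = 1 / real d" using P by blast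
      finally show "Dw n d p w (u(k := v)) z = 1 / real d" .
    qed
  qed
  then show ?thesis by blast
qed

lemma prime_not_dvd_mult:
  fixes x y :: int
  assumes "prime (int d)" "\<not> int d dvd x" "\<not> int d dvd y"
  shows "\<not> int d dvd x * y"
  using assms prime_dvd_mult_iff by blast

lemma uniform_main:
  assumes cd: "is_cond_dist n d c p" and pr: "\<forall>s\<in>Ins n c. prob_sum_eq n d f p s = 1"
    and ns: "non_signaling n d c p" and d: "prime d" and c: "\<forall>j<n. c j > 0"
    and nb: "\<not> bipartite_linear n d c f"
    and j1: "j1 < n" and k1: "k1 < n" and wjk: "(w j1 - w k1) mod int d \<noteq> 0"
    and s: "s \<in> Ins n c"
  shows "Dw n d p w s z = 1 / real d"
proof -
  have d0: "d > 0" using d prime_gt_0_nat by blast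
  have pd: "prime (int d)" using d by simp
  define A where "A = {i. i < n \<and> int d dvd (w i - w j1)}"
  define B where "B = {..<n} - A"
  have j1A: "j1 \<in> A" unfolding A_def using j1 by simp
  have k1nd: "\<not> int d dvd (w k1 - w j1)"
  proof
    assume "int d dvd (w k1 - w j1)"
    then have "int d dvd (w j1 - w k1)" by (simp add: dvd_diff_commute)
    then show False using wjk by (simp add: dvd_eq_mod_eq_0)
  qed
  have k1B: "k1 \<in> B" unfolding B_def A_def using k1 k1nd by simp
  have AB: "A \<noteq> {}" "B \<noteq> {}" "A \<inter> B = {}" "A \<union> B = {..<n}"
    using j1A k1B unfolding B_def A_def by auto
  have "\<not> (\<forall>s j k v u. s \<in> Ins n c \<longrightarrow> j \<in> A \<longrightarrow> k \<in> B \<longrightarrow> v < c j \<longrightarrow> u < c k \<longrightarrow>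
        [int (f (s(j:=v))) + int (f (s(k:=u))) = int (f s) + int (f (s(j:=v, k:=u)))] (mod int d))"
    using mixed_to_bip[OF AB c d0] nb by blast
  then obtain s0 j k v u where s0: "s0 \<in> Ins n c" and j: "j \<in> A" and k: "k \<in> B"
    and v: "v < c j" and u: "u < c k"
    and nc: "\<not> [int (f (s0(j:=v))) + int (f (s0(k:=u))) = int (f s0) + int (f (s0(j:=v, k:=u)))] (mod int d)"
    by blast
  have jn: "j < n" and kn: "k < n" and jk: "j \<noteq> k" using j k unfolding A_def B_def by auto
  have wnd: "\<not> int d dvd (w j - w k)"
  proof
    assume h: "int d dvd (w j - w k)"
    have "int d dvd (w j - w j1)" using j unfolding A_def by simp
    then have "int d dvd ((w j - w j1) - (w j - w k))" using h by (rule dvd_diff)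
    then have "int d dvd (w k - w j1)" by simp
    then show False using k unfolding B_def A_def using kn by simp
  qed
  have dnd: "\<not> int d dvd (int (f (s0(j:=v))) + int (f (s0(k:=u))) - int (f s0) - int (f (s0(j:=v, k:=u))))"
    using nc unfolding cong_iff_dvd_diff by (simp add: algebra_simps)
  define U where "U = (w j - w k) * (int (f (s0(j:=v))) + int (f (s0(k:=u))) - int (f s0) - int (f (s0(j:=v, k:=u))))"
  have "\<not> int d dvd U" unfolding U_def by (rule prime_not_dvd_mult[OF pd wnd dnd])
  then have cop: "coprime U (int d)" using prime_imp_coprime[OF pd] by (simp add: coprime_commute)
  have per: "\<forall>y. Dw n d p w s0 y = Dw n d p w s0 (y + U)"
    unfolding U_def using D_square[OF cd pr ns s0 jn kn jk v u] by blast
  have u0: "\<forall>z. Dw n d p w s0 z = 1 / real d"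
    using D_uniform_period[OF cd s0 d0 per cop] by blast
  show ?thesis by (rule D_all_uniform[OF cd pr ns s0 u0 s])
qed

lemma sum_delta_int:
  fixes n a :: nat and t :: "nat \<Rightarrow> nat"
  assumes "a < n"
  shows "(\<Sum>i<n. (if i = a then 1 else 0) * int (t i)) = int (t a)"
proof -
  have "(\<Sum>i<n. (if i = a then 1 else 0) * int (t i)) = (\<Sum>i<n. if i = a then int (t i) else 0)"
    by (rule sum.cong) auto
  also have "\<dots> = int (t a)" by (rule trans[OF sum.delta]) (simp_all add: assms)
  finally show ?thesis .
qed

lemma card_T0:
  assumes d0: "d > 0" and n: "n > 0"
  shows "card {t\<in>Outs n d. t (n - 1) = 0} = d ^ (n - 1)"
proof -
  have n1: "n - 1 < n" using n by simp
  have "d * card {t\<in>Outs n d. True \<and> (\<Sum>i<n. (\<lambda>i. if i = n - 1 then 1 else 0) i * int (t i)) mod int d = 0 mod int d}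
      = card {t\<in>Outs n d. True}"
    by (rule count_uniform[where w="\<lambda>i. if i = n - 1 then 1 else 0" and Q="\<lambda>_. True", OF d0 n1]) simp_all
  moreover have "{t\<in>Outs n d. True \<and> (\<Sum>i<n. (\<lambda>i. if i = n - 1 then 1 else 0) i * int (t i)) mod int d = 0 mod int d}
      = {t\<in>Outs n d. t (n - 1) = 0}"
  proof (rule Collect_cong)
    fix t
    show "(t \<in> Outs n d \<and> True \<and> (\<Sum>i<n. (\<lambda>i. if i = n - 1 then 1 else 0) i * int (t i)) mod int d = 0 mod int d)
        = (t \<in> Outs n d \<and> t (n - 1) = 0)"
    proof (cases "t \<in> Outs n d")
      case True
      then have "t (n - 1) < d" using Outs_lt n1 by blast
      then have "int (t (n - 1)) mod int d = int (t (n - 1))" by simp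
      then show ?thesis using True sum_delta_int[OF n1, of t] by simp
    qed simp
  qed
  ultimately have "d * card {t\<in>Outs n d. t (n - 1) = 0} = d ^ n" by (simp add: card_Outs)
  moreover have "d ^ n = d * d ^ (n - 1)" using n by (metis Suc_diff_1 power_Suc)
  ultimately show ?thesis using d0 by simp
qed

lemma int_not_dvd_small:
  fixes x :: int
  assumes "x \<noteq> 0" "\<bar>x\<bar> < int d"
  shows "\<not> int d dvd x"
  using dvd_imp_le_int[OF assms(1)] assms(2) by fastforce

lemma final_count:
  assumes cd: "is_cond_dist n d c p" and pr: "\<forall>s\<in>Ins n c. prob_sum_eq n d f p s = 1"
    and n: "n \<ge> 2" and d: "prime d"
    and unif: "\<And>w s z. (\<exists>j<n. \<exists>k<n. (w j - w k) mod int d \<noteq> 0) \<Longrightarrow> s \<in> Ins n c \<Longrightarrow> Dw n d p w s z = 1 / real d"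
    and s: "s \<in> Ins n c" and m0: "m0 \<in> Outs n d" and good: "(\<Sum>j<n. m0 j) mod d = f s mod d"
  shows "p m0 s = 1 / real d ^ (n - 1)"
proof -
  have d0: "d > 0" using d prime_gt_0_nat by blast
  have d1: "d > 1" using d prime_gt_1_nat by blast
  have pd: "prime (int d)" using d by simp
  have n0: "n > 0" and n1: "n - 1 < n" using n by auto
  have prs: "prob_sum_eq n d f p s = 1" using pr s by blast
  define zero :: "nat \<Rightarrow> nat" where "zero = (\<lambda>j. if j < n then 0 else undefined)"
  define T0 where "T0 = {t\<in>Outs n d. t (n - 1) = 0}"
  define T where "T = T0 - {zero}"
  define wt :: "(nat \<Rightarrow> nat) \<Rightarrow> nat \<Rightarrow> int" where "wt t = (\<lambda>i. int (t i))" for t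
  define P where "P t m \<longleftrightarrow> Lw n (wt t) m mod int d = Lw n (wt t) m0 mod int d" for t m
  have zT0: "zero \<in> T0" unfolding T0_def zero_def Outs_def using d0 n1 by (auto simp: PiE_iff extensional_def)
  have finT0: "finite T0" unfolding T0_def using finite_Outs by simp
  have finT: "finite T" unfolding T_def using finT0 by simp
  have cT0: "card T0 = d ^ (n - 1)" unfolding T0_def by (rule card_T0[OF d0 n0])
  have cT: "card T = d ^ (n - 1) - 1" unfolding T_def using zT0 finT0 cT0 by (simp add: card_Diff_singleton)
  have Lzero: "Lw n (wt zero) m = 0" for m unfolding Lw_def wt_def zero_def by simp
  have DT: "Dw n d p (wt t) s z = 1 / real d" if t: "t \<in> T" for t z
  proof (rule unif[OF _ s])
    have tO: "t \<in> Outs n d" and t0: "t (n - 1) = 0" and tz: "t \<noteq> zero" using t unfolding T_def T0_def by auto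
    obtain j where j: "j < n" "t j \<noteq> 0"
    proof -
      have "\<exists>j<n. t j \<noteq> 0"
      proof (rule ccontr)
        assume "\<not> (\<exists>j<n. t j \<noteq> 0)"
        then have "t = zero" using tO unfolding zero_def Outs_def by (auto simp: fun_eq_iff PiE_iff extensional_def)
        then show False using tz by simp
      qed
      then show ?thesis using that by blast
    qed
    have "t j < d" using Outs_lt[OF tO j(1)] .
    then have "(wt t j - wt t (n - 1)) mod int d \<noteq> 0" using j t0 unfolding wt_def by simp
    then show "\<exists>j<n. \<exists>k<n. (wt t j - wt t k) mod int d \<noteq> 0" using j(1) n1 by blast
  qed
  have "(\<Sum>t\<in>T. Dw n d p (wt t) s (Lw n (wt t) m0)) = real (card T) / real d"
    using DT by simp
  moreover have "(\<Sum>t\<in>T. Dw n d p (wt t) s (Lw n (wt t) m0))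
      = (\<Sum>m\<in>Outs n d. p m s * real (card {t\<in>T. P t m}))"
  proof -
    have "(\<Sum>t\<in>T. Dw n d p (wt t) s (Lw n (wt t) m0)) = (\<Sum>t\<in>T. \<Sum>m\<in>Outs n d. if P t m then p m s else 0)"
      unfolding Dw_def P_def by (rule sum.cong[OF refl], rule sum.inter_filter[OF finite_Outs])
    also have "\<dots> = (\<Sum>m\<in>Outs n d. \<Sum>t\<in>T. if P t m then p m s else 0)" by (rule sum.swap)
    also have "\<dots> = (\<Sum>m\<in>Outs n d. p m s * real (card {t\<in>T. P t m}))"
      by (rule sum.cong[OF refl], rule sum_if_const[OF finT])
    finally show ?thesis .
  qed
  moreover define N1 :: real where "N1 = real d ^ (n - 1) - 1"
  moreover define N2 :: real where "N2 = real d ^ (n - 2) - 1"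
  moreover have pt: "p m s * real (card {t\<in>T. P t m}) = p m s * (if m = m0 then N1 else N2)" if m: "m \<in> Outs n d" for m
  proof (cases "m = m0")
    case True
    then have "{t\<in>T. P t m} = T" unfolding P_def by simp
    moreover have "1 \<le> d ^ (n - 1)" using d0 by simp
    ultimately have "real (card {t\<in>T. P t m}) = N1" unfolding N1_def using cT
      by (simp add: of_nat_diff)
    then show ?thesis using True by simp
  next
    case False
    show ?thesis
    proof (cases "(\<Sum>j<n. m j) mod d = f s mod d")
      case bad: False
      then have "p m s = 0" using zero_bad[OF cd prs s m] by blast
      then show ?thesis by simp
    next
      case gm: True
      obtain j where j: "j < n - 1" "m j \<noteq> m0 j"
      proof -
        have "\<exists>j<n - 1. m j \<noteq> m0 j"
        proof (rule ccontr)
          assume "\<not> (\<exists>j<n - 1. m j \<noteq> m0 j)"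
          then have ag: "\<forall>j<n - 1. m j = m0 j" by blast
          have sn: "Suc (n - 1) = n" using n by simp
          have "(\<Sum>j<n - 1. m j) = (\<Sum>j<n - 1. m0 j)" using ag by simp
          moreover have "(\<Sum>j<n. m j) = (\<Sum>j<n - 1. m j) + m (n - 1)"
            by (metis sn sum.lessThan_Suc)
          moreover have "(\<Sum>j<n. m0 j) = (\<Sum>j<n - 1. m0 j) + m0 (n - 1)"
            by (metis sn sum.lessThan_Suc)
          ultimately have "((\<Sum>j<n - 1. m0 j) + m (n - 1)) mod d = ((\<Sum>j<n - 1. m0 j) + m0 (n - 1)) mod d"
            using gm good by simp
          then have "m (n - 1) mod d = m0 (n - 1) mod d"
            using cong_add_lcancel_nat[of "\<Sum>j<n - 1. m0 j" "m (n - 1)" "m0 (n - 1)" d] unfolding cong_def by blast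
          then have "m (n - 1) = m0 (n - 1)" using Outs_lt[OF m n1] Outs_lt[OF m0 n1] by simp
          then have "m = m0" using ag m m0 unfolding Outs_def
            apply (auto simp: fun_eq_iff PiE_iff extensional_def)
            by (metis One_nat_def Suc_pred n0 not_less_less_Suc_eq)
          then show False using False by simp
        qed
        then show ?thesis using that by blast
      qed
      have jn: "j < n" "j \<noteq> n - 1" using j by auto
      define v where "v = (\<lambda>i. int (m i) - int (m0 i))"
      have vnz: "\<not> int d dvd v j"
        unfolding v_def using j Outs_lt[OF m jn(1)] Outs_lt[OF m0 jn(1)] by (intro int_not_dvd_small) auto
      have cop: "coprime (v j) (int d)" using prime_imp_coprime[OF pd vnz] by (simp add: coprime_commute)
      have Pv: "P t m \<longleftrightarrow> (\<Sum>i<n. v i * int (t i)) mod int d = 0 mod int d" for t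
      proof -
        have "Lw n (wt t) m - Lw n (wt t) m0 = (\<Sum>i<n. v i * int (t i))"
          unfolding Lw_def wt_def v_def by (simp add: sum_subtractf[symmetric] algebra_simps)
        then show ?thesis unfolding P_def mod_eq_dvd_iff by simp
      qed
      have "d * card {t\<in>Outs n d. t (n - 1) = 0 \<and> (\<Sum>i<n. v i * int (t i)) mod int d = 0 mod int d}
          = card {t\<in>Outs n d. t (n - 1) = 0}"
        by (rule count_uniform[where w=v and Q="\<lambda>t. t (n - 1) = 0", OF d0 jn(1) cop]) (use jn in simp)
      then have "d * card {t\<in>T0. P t m} = d ^ (n - 1)"
        unfolding T0_def Pv card_T0[OF d0 n0] by (simp add: conj_assoc)
      moreover have "d ^ (n - 1) = d * d ^ (n - 2)"
      proof -
        have "n - 1 = Suc (n - 2)" using n by simp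
        then show ?thesis by simp
      qed
      ultimately have c0: "card {t\<in>T0. P t m} = d ^ (n - 2)" using d0 by simp
      have "{t\<in>T. P t m} = {t\<in>T0. P t m} - {zero}" unfolding T_def by auto
      moreover have "zero \<in> {t\<in>T0. P t m}" using zT0 Lzero[of m] Lzero[of m0] unfolding P_def by simp
      ultimately have "card {t\<in>T. P t m} = d ^ (n - 2) - 1" using c0 finT0 by (simp add: card_Diff_singleton)
      moreover have "1 \<le> d ^ (n - 2)" using d0 by simp
      ultimately have "real (card {t\<in>T. P t m}) = N2" unfolding N2_def by (simp add: of_nat_diff)
      then show ?thesis using False by simp
    qed
  qed
  moreover have "(\<Sum>m\<in>Outs n d. p m s * (if m = m0 then N1 else N2)) = p m0 s * N1 + (1 - p m0 s) * N2"
  proof -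
    have tot: "(\<Sum>m\<in>Outs n d. p m s) = 1" using cd s unfolding is_cond_dist_def by blast
    have "(\<Sum>m\<in>Outs n d. p m s * (if m = m0 then N1 else N2))
        = p m0 s * N1 + (\<Sum>m\<in>Outs n d - {m0}. p m s * (if m = m0 then N1 else N2))"
      by (simp add: sum.remove[OF finite_Outs m0])
    also have "(\<Sum>m\<in>Outs n d - {m0}. p m s * (if m = m0 then N1 else N2)) = (\<Sum>m\<in>Outs n d - {m0}. p m s) * N2"
      by (simp add: sum_distrib_right)
    also have "(\<Sum>m\<in>Outs n d - {m0}. p m s) = 1 - p m0 s"
      using tot sum.remove[OF finite_Outs m0, of "\<lambda>m. p m s"] by simp
    finally show ?thesis .
  qed
  moreover have "1 \<le> d ^ (n - 1)" using d0 by simp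
  ultimately have eq: "p m0 s * N1 + (1 - p m0 s) * N2 = (real d ^ (n - 1) - 1) / real d"
    using cT by (simp add: of_nat_diff)
  define e :: real where "e = real d ^ (n - 2)"
  have e1: "real d ^ (n - 1) = real d * e"
  proof -
    have "n - 1 = Suc (n - 2)" using n by simp
    then show ?thesis unfolding e_def by simp
  qed
  have epos: "e > 0" unfolding e_def using d0 by simp
  have "p m0 s * (real d * e - 1) + (1 - p m0 s) * (e - 1) = (real d * e - 1) / real d"
    using eq unfolding N1_def N2_def e1 e_def[symmetric] .
  then have "p m0 s * (e * (real d - 1)) = (real d - 1) / real d"
    using d0 by (simp add: field_simps)
  then have "(p m0 s * e * real d - 1) * (real d - 1) = 0"
    using d0 by (simp add: field_simps)
  moreover have "real d - 1 \<noteq> 0" using d1 by simp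
  ultimately have "p m0 s * e * real d = 1" by simp
  then have "p m0 s = 1 / (real d * e)"
    using d0 epos by (simp add: field_simps)
  then show ?thesis using e1 by simp
qed


theorem theorem2:
  fixes n d :: nat and c :: "nat \<Rightarrow> nat" and f :: "(nat \<Rightarrow> nat) \<Rightarrow> nat"
  assumes "n \<ge> 2" and "\<forall>j<n. c j \<ge> 2" and "prime d"
    and "\<forall>s\<in>Ins n c. f s < d"
  shows "is_cond_dist n d c (box_dist n d f)
    \<and> non_signaling n d c (box_dist n d f)
    \<and> (\<forall>s\<in>Ins n c. prob_sum_eq n d f (box_dist n d f) s = 1)
    \<and> ((\<forall>p. is_cond_dist n d c p \<and> non_signaling n d c p
            \<and> (\<forall>s\<in>Ins n c. prob_sum_eq n d f p s = 1)
            \<longrightarrow> (\<forall>s\<in>Ins n c. \<forall>m\<in>Outs n d. p m s = box_dist n d f m s))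
       \<longleftrightarrow> \<not> bipartite_linear n d c f)"
proof -
  have n: "n \<ge> 2" and c2: "\<forall>j<n. c j \<ge> 2" and d: "prime d" using assms by auto
  have d0: "d > 0" using d prime_gt_0_nat by blast
  have d2: "d \<ge> 2" using d prime_ge_2_nat by blast
  have n0: "n > 0" using n by simp
  have c0: "\<forall>j<n. c j > 0" using c2 by (metis less_le_trans pos2)
  have P1: "is_cond_dist n d c (box_dist n d f)" by (rule box_cond[OF n0 d0])
  have P2: "non_signaling n d c (box_dist n d f)" by (rule box_ns[OF n0 d0])
  have P3: "\<forall>s\<in>Ins n c. prob_sum_eq n d f (box_dist n d f) s = 1" using box_prob[OF n0 d0] by blast
  have P4: "(\<forall>p. is_cond_dist n d c p \<and> non_signaling n d c p
            \<and> (\<forall>s\<in>Ins n c. prob_sum_eq n d f p s = 1)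
            \<longrightarrow> (\<forall>s\<in>Ins n c. \<forall>m\<in>Outs n d. p m s = box_dist n d f m s))
       \<longleftrightarrow> \<not> bipartite_linear n d c f"
  proof
    assume U: "\<forall>p. is_cond_dist n d c p \<and> non_signaling n d c p
            \<and> (\<forall>s\<in>Ins n c. prob_sum_eq n d f p s = 1)
            \<longrightarrow> (\<forall>s\<in>Ins n c. \<forall>m\<in>Outs n d. p m s = box_dist n d f m s)"
    show "\<not> bipartite_linear n d c f"
    proof
      assume "bipartite_linear n d c f"
      then obtain p where "is_cond_dist n d c p \<and> non_signaling n d c p
            \<and> (\<forall>s\<in>Ins n c. prob_sum_eq n d f p s = 1)
            \<and> \<not> (\<forall>s\<in>Ins n c. \<forall>m\<in>Outs n d. p m s = box_dist n d f m s)"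
        using bip_nonunique[OF n d2 c2] by blast
      then show False using U by blast
    qed
  next
    assume nb: "\<not> bipartite_linear n d c f"
    show "\<forall>p. is_cond_dist n d c p \<and> non_signaling n d c p
            \<and> (\<forall>s\<in>Ins n c. prob_sum_eq n d f p s = 1)
            \<longrightarrow> (\<forall>s\<in>Ins n c. \<forall>m\<in>Outs n d. p m s = box_dist n d f m s)"
    proof (intro allI impI ballI)
      fix p s m
      assume H: "is_cond_dist n d c p \<and> non_signaling n d c p \<and> (\<forall>s\<in>Ins n c. prob_sum_eq n d f p s = 1)"
        and s: "s \<in> Ins n c" and m: "m \<in> Outs n d"
      have cd: "is_cond_dist n d c p" and ns: "non_signaling n d c p"
        and pr: "\<forall>s\<in>Ins n c. prob_sum_eq n d f p s = 1" using H by auto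
      show "p m s = box_dist n d f m s"
      proof (cases "(\<Sum>j<n. m j) mod d = f s mod d")
        case True
        have unif: "Dw n d p w s' z = 1 / real d"
          if ex: "\<exists>j<n. \<exists>k<n. (w j - w k) mod int d \<noteq> 0" and s': "s' \<in> Ins n c" for w s' z
        proof -
          obtain j k where "j < n" "k < n" "(w j - w k) mod int d \<noteq> 0" using ex by blast
          then show ?thesis using uniform_main[OF cd pr ns d c0 nb _ _ _ s'] by blast
        qed
        have "p m s = 1 / real d ^ (n - 1)"
          by (rule final_count[OF cd pr n d unif s m True])
        then show ?thesis unfolding box_dist_def using True by simp
      next
        case False
        have prs: "prob_sum_eq n d f p s = 1" using pr s by blast
        have "p m s = 0" by (rule zero_bad[OF cd prs s m False])
        then show ?thesis unfolding box_dist_def using False by simp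
      qed
    qed
  qed
  show ?thesis using P1 P2 P3 P4 by blast
qed

end
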